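(* Let $f: E \to \Delta[n]$ be a surjective map of simplicial sets and let $\alpha$ be a vertex of the barycentric subdivision $\Delta'[n]$, i.e. a non-degenerate face $\alpha: \Delta[k] \hookrightarrow \Delta[n]$. Then the inclusion $Sdf^{-1}(\alpha) \hookrightarrow ESt(\alpha)$ is a homotopy equivalence.
   Context: The barycentric subdivision $\Delta'[n]$ is the simplicial set whose $q$-simplices are chains $\mu=(\mu_0,\dots,\mu_q)$ of non-degenerate faces $\mu_i:\Delta[k_i]\hookrightarrow\Delta[n]$ with $\mathrm{Im}\,\mu_i\subseteq\mathrm{Im}\,\mu_{i+1}$, with simplicial operator $\theta:[q']\to[q]$ acting by $\mu\mapsto(\mu_{\theta(0)},\dots,\mu_{\theta(q')})$; it is functorial in $n$. For a simplicial set $E$, the subdivision is $SdE=\mathrm{colim}_{\Delta E}\Delta'[p]$ over the simplex category of $E$; its $q$-simplices are classes $[x,\mu]$ with $x$ a $p$-simplex of $E$ and $\mu$ a $q$-simplex of $\Delta'[p]$. For $f:E\to\Delta[n]$, the map $Sdf: SdE\to\Delta'[n]$ sends $[x,\mu]$ to $(\nu_0,\dots,\nu_q)$, where $f\circ x\circ\mu_i:\Delta[k_i]\to\Delta[n]$ is factored uniquely as a surjection $\Delta[k_i]\to\Delta[l_i]$ followed by an injection $\nu_i:\Delta[l_i]\hookrightarrow\Delta[n]$. $Sdf^{-1}(\alpha)$ is the preimage under $Sdf$ of the vertex $\alpha$ (the simplices mapping to degeneracies of $\alpha$). The star $St(\alpha)\subseteq\Delta'[n]$ is the subspace of simplices $(\mu_0,\dots,\mu_p)$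 with $\mathrm{Im}\,\mu_i\supseteq\mathrm{Im}\,\alpha$ for all $i$, and $ESt(\alpha)=Sdf^{-1}(St(\alpha))$. *)

theory Defs
  imports Main
begin

text \<open>A simplicial operator theta : [q'] -> [q] (a monotone map) is represented by the list
  [theta 0, ..., theta q'] of its values.\<close>

definition ops :: "nat \<Rightarrow> nat \<Rightarrow> nat list set" where
  "ops q' q = {\<theta>. length \<theta> = Suc q' \<and> sorted \<theta> \<and> (\<forall>i\<in>set \<theta>. i \<le> q)}"

text \<open>Composition: ocomp theta phi is theta after phi.\<close>
definition ocomp :: "nat list \<Rightarrow> nat list \<Rightarrow> nat list" where
  "ocomp \<theta> \<phi> = map (nth \<theta>) \<phi>"

definition oid :: "nat \<Rightarrow> nat list" where
  "oid q = [0..<Suc q]"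

text \<open>cells X q is the set of q-simplices; act X q theta x is the action x.theta of an
  operator theta : [q'] -> [q] on a q-simplex x.\<close>
record 'a sset =
  cells :: "nat \<Rightarrow> 'a set"
  act :: "nat \<Rightarrow> nat list \<Rightarrow> 'a \<Rightarrow> 'a"

definition sset :: "'a sset \<Rightarrow> bool" where
  "sset X \<longleftrightarrow>
     (\<forall>q q' \<theta> x. x \<in> cells X q \<longrightarrow> \<theta> \<in> ops q' q \<longrightarrow> act X q \<theta> x \<in> cells X q') \<and>
     (\<forall>q x. x \<in> cells X q \<longrightarrow> act X q (oid q) x = x) \<and>
     (\<forall>q q' q'' \<theta> \<phi> x. x \<in> cells X q \<longrightarrow> \<theta> \<in> ops q' q \<longrightarrow> \<phi> \<in> ops q'' q' \<longrightarrow>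
         act X q' \<phi> (act X q \<theta> x) = act X q (ocomp \<theta> \<phi>) x)"

definition smap :: "'a sset \<Rightarrow> 'b sset \<Rightarrow> ('a \<Rightarrow> 'b) \<Rightarrow> bool" where
  "smap X Y f \<longleftrightarrow>
     (\<forall>q x. x \<in> cells X q \<longrightarrow> f x \<in> cells Y q) \<and>
     (\<forall>q q' \<theta> x. x \<in> cells X q \<longrightarrow> \<theta> \<in> ops q' q \<longrightarrow> f (act X q \<theta> x) = act Y q \<theta> (f x))"

definition subsset :: "'a sset \<Rightarrow> (nat \<Rightarrow> 'a \<Rightarrow> bool) \<Rightarrow> 'a sset" where
  "subsset X P = \<lparr>cells = (\<lambda>q. {x \<in> cells X q. P q x}), act = act X\<rparr>"

definition stdsimplex :: "nat \<Rightarrow> nat list sset" where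
  "stdsimplex n = \<lparr>cells = (\<lambda>q. ops q n), act = (\<lambda>q \<theta> x. ocomp x \<theta>)\<rparr>"

text \<open>Non-degenerate faces Delta[k] -> Delta[n]: injective operators, i.e. strictly
  increasing lists; the image is the set of entries.\<close>
definition face :: "nat \<Rightarrow> nat list \<Rightarrow> bool" where
  "face n \<mu> \<longleftrightarrow> \<mu> \<noteq> [] \<and> sorted_wrt (<) \<mu> \<and> (\<forall>i\<in>set \<mu>. i \<le> n)"

text \<open>q-simplices of Delta'[n]: chains (mu_0,...,mu_q) of non-degenerate faces with
  Im mu_i contained in Im mu_(i+1).\<close>
definition chains :: "nat \<Rightarrow> nat \<Rightarrow> nat list list set" where
  "chains n q = {\<mu>. length \<mu> = Suc q \<and> (\<forall>i<length \<mu>. face n (\<mu> ! i)) \<and>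
                     (\<forall>i. Suc i < length \<mu> \<longrightarrow> set (\<mu> ! i) \<subseteq> set (\<mu> ! Suc i))}"

definition bsd :: "nat \<Rightarrow> nat list list sset" where
  "bsd n = \<lparr>cells = chains n, act = (\<lambda>q \<theta> \<mu>. map (nth \<mu>) \<theta>)\<rparr>"

text \<open>Image face: the unique injective part of the epi-mono factorisation of an operator.\<close>
definition imface :: "nat list \<Rightarrow> nat list" where
  "imface \<theta> = sorted_list_of_set (set \<theta>)"

text \<open>Functoriality of Delta'[-]: theta : [p'] -> [p] induces Delta'[p'] -> Delta'[p].\<close>
definition bsd_push :: "nat list \<Rightarrow> nat list list \<Rightarrow> nat list list" where
  "bsd_push \<theta> \<mu> = map (\<lambda>m. imface (ocomp \<theta> m)) \<mu>"

section \<open>Subdivision Sd E = colim over the simplex category of E of Delta'[p]\<close>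

text \<open>Representatives of q-simplices: triples (p, x, mu) with x a p-simplex of E and
  mu a q-simplex of Delta'[p].\<close>
definition sd_gen :: "'a sset \<Rightarrow> nat \<Rightarrow> (nat \<times> 'a \<times> nat list list) \<Rightarrow> (nat \<times> 'a \<times> nat list list) \<Rightarrow> bool" where
  "sd_gen E q t t' \<longleftrightarrow> (\<exists>p p' x \<theta> \<mu>. x \<in> cells E p \<and> \<theta> \<in> ops p' p \<and> \<mu> \<in> chains p' q \<and>
        t = (p', act E p \<theta> x, \<mu>) \<and> t' = (p, x, bsd_push \<theta> \<mu>))"

definition sd_class :: "'a sset \<Rightarrow> nat \<Rightarrow> (nat \<times> 'a \<times> nat list list) \<Rightarrow> (nat \<times> 'a \<times> nat list list) set" where
  "sd_class E q t = {t'. equivclp (sd_gen E q) t t'}"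

definition Sd :: "'a sset \<Rightarrow> (nat \<times> 'a \<times> nat list list) set sset" where
  "Sd E = \<lparr>cells = (\<lambda>q. {sd_class E q (p, x, \<mu>) | p x \<mu>. x \<in> cells E p \<and> \<mu> \<in> chains p q}),
           act = (\<lambda>q \<theta> c. (case (SOME t. t \<in> c) of (p, x, \<mu>) \<Rightarrow>
                    sd_class E (length \<theta> - 1) (p, x, map (nth \<mu>) \<theta>)))\<rparr>"

definition Sdf :: "('a \<Rightarrow> nat list) \<Rightarrow> (nat \<times> 'a \<times> nat list list) set \<Rightarrow> nat list list" where
  "Sdf f c = (case (SOME t. t \<in> c) of (p, x, \<mu>) \<Rightarrow> map (\<lambda>m. imface (ocomp (f x) m)) \<mu>)"

text \<open>Preimage of the vertex alpha: simplices mapped to degeneracies of alpha.\<close>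
definition Sd_fiber :: "'a sset \<Rightarrow> ('a \<Rightarrow> nat list) \<Rightarrow> nat list \<Rightarrow> (nat \<times> 'a \<times> nat list list) set sset" where
  "Sd_fiber E f \<alpha> = subsset (Sd E) (\<lambda>q c. Sdf f c = replicate (Suc q) \<alpha>)"

definition star :: "nat \<Rightarrow> nat list \<Rightarrow> nat \<Rightarrow> nat list list set" where
  "star n \<alpha> q = {\<mu> \<in> chains n q. \<forall>i<length \<mu>. set \<alpha> \<subseteq> set (\<mu> ! i)}"

definition ESt :: "'a sset \<Rightarrow> ('a \<Rightarrow> nat list) \<Rightarrow> nat \<Rightarrow> nat list \<Rightarrow> (nat \<times> 'a \<times> nat list list) set sset" where
  "ESt E f n \<alpha> = subsset (Sd E) (\<lambda>q c. Sdf f c \<in> star n \<alpha> q)"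

definition sprod :: "'a sset \<Rightarrow> 'b sset \<Rightarrow> ('a \<times> 'b) sset" where
  "sprod X Y = \<lparr>cells = (\<lambda>q. cells X q \<times> cells Y q),
                act = (\<lambda>q \<theta> (x, y). (act X q \<theta> x, act Y q \<theta> y))\<rparr>"

definition elem_htpy :: "'a sset \<Rightarrow> 'b sset \<Rightarrow> ('a \<Rightarrow> 'b) \<Rightarrow> ('a \<Rightarrow> 'b) \<Rightarrow> bool" where
  "elem_htpy X Y f g \<longleftrightarrow> smap X Y f \<and> smap X Y g \<and>
     (\<exists>H. smap (sprod X (stdsimplex 1)) Y H \<and>
          (\<forall>q x. x \<in> cells X q \<longrightarrow> H (x, replicate (Suc q) 0) = f x \<and> H (x, replicate (Suc q) 1) = g x))"

definition homotopic :: "'a sset \<Rightarrow> 'b sset \<Rightarrow> ('a \<Rightarrow> 'b) \<Rightarrow> ('a \<Rightarrow> 'b) \<Rightarrow> bool" where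
  "homotopic X Y f g \<longleftrightarrow> smap X Y f \<and> smap X Y g \<and> equivclp (elem_htpy X Y) f g"

definition homotopy_equivalence :: "'a sset \<Rightarrow> 'b sset \<Rightarrow> ('a \<Rightarrow> 'b) \<Rightarrow> bool" where
  "homotopy_equivalence X Y i \<longleftrightarrow> smap X Y i \<and>
     (\<exists>g. smap Y X g \<and> homotopic X X (g \<circ> i) id \<and> homotopic Y Y (i \<circ> g) id)"

end

theory Submission
  imports Defs
begin


lemma ssl_set: "sorted_wrt (<) (xs::nat list) \<Longrightarrow> sorted_list_of_set (set xs) = xs"
  by (metis finite_set set_sorted_list_of_set strict_sorted_equal strict_sorted_list_of_set)

lemma set_imface[simp]: "set (imface xs) = set xs"
  by (simp add: imface_def)

lemma imface_eqI: "set xs = set ys \<Longrightarrow> imface xs = imface ys"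
  by (simp add: imface_def)

lemma face_imface: "\<theta> \<in> ops p' p \<Longrightarrow> face p' m \<Longrightarrow> face p (imface (ocomp \<theta> m))"
  unfolding face_def ops_def imface_def ocomp_def
  by (auto simp: strict_sorted_list_of_set)

lemma chain_mono:
  assumes "\<mu> \<in> chains p q" "i \<le> j" "j < length \<mu>"
  shows "set (\<mu> ! i) \<subseteq> set (\<mu> ! j)"
  using assms(2,3)
proof (induction j)
  case 0 then show ?case by simp
next
  case (Suc j)
  show ?case
  proof (cases "i = Suc j")
    case False
    then have "set (\<mu> ! i) \<subseteq> set (\<mu> ! j)" using Suc by simp
    moreover have "set (\<mu> ! j) \<subseteq> set (\<mu> ! Suc j)" using assms(1) Suc.prems unfolding chains_def by blast
    ultimately show ?thesis by blast
  qed simp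
qed

lemma push_chains:
  assumes "\<theta> \<in> ops p' p" "\<mu> \<in> chains p' q"
  shows "bsd_push \<theta> \<mu> \<in> chains p q"
  using assms face_imface unfolding chains_def bsd_push_def
  apply (auto simp: ocomp_def)
  apply (metis Suc_lessD image_iff subset_iff)
  done

lemma act_chains:
  assumes "\<phi> \<in> ops q' q" "\<mu> \<in> chains p q"
  shows "map (nth \<mu>) \<phi> \<in> chains p q'"
proof -
  have L: "length \<mu> = Suc q" "\<forall>i<length \<mu>. face p (\<mu> ! i)" using assms(2) unfolding chains_def by auto
  have P: "length \<phi> = Suc q'" "sorted \<phi>" "\<forall>i\<in>set \<phi>. i \<le> q" using assms(1) unfolding ops_def by auto
  have b: "\<phi> ! i < length \<mu>" if "i < length \<phi>" for i
  proof -
    have "\<phi> ! i \<in> set \<phi>" using that by simp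
    then show ?thesis using P L by (simp add: less_Suc_eq_le)
  qed
  moreover have "set (\<mu> ! (\<phi> ! i)) \<subseteq> set (\<mu> ! (\<phi> ! Suc i))" if "Suc i < length \<phi>" for i
  proof (rule chain_mono[OF assms(2)])
    show "\<phi> ! i \<le> \<phi> ! Suc i" using P(2) that by (simp add: sorted_iff_nth_mono)
    show "\<phi> ! Suc i < length \<mu>" using b that by simp
  qed
  ultimately show ?thesis using P L unfolding chains_def by auto
qed

lemma push_push: "\<forall>j\<in>set m. j < length \<theta> \<Longrightarrow> imface (ocomp (ocomp a \<theta>) m) = imface (ocomp a (imface (ocomp \<theta> m)))"
  by (rule imface_eqI) (auto simp: ocomp_def)

lemma act_push: "\<forall>i\<in>set \<phi>. i < length \<mu> \<Longrightarrow> map (nth (bsd_push \<theta> \<mu>)) \<phi> = bsd_push \<theta> (map (nth \<mu>) \<phi>)"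
  by (simp add: bsd_push_def)


definition restr :: "nat list \<Rightarrow> nat list \<Rightarrow> nat list \<Rightarrow> nat list" where
  "restr \<alpha> a m = filter (\<lambda>j. a ! j \<in> set \<alpha>) m"

definition mix :: "nat list \<Rightarrow> nat list \<Rightarrow> nat list \<Rightarrow> nat list list \<Rightarrow> nat list list" where
  "mix \<alpha> \<psi> a \<mu> = map (\<lambda>(b,m). if b = 0 then restr \<alpha> a m else m) (zip \<psi> \<mu>)"

lemma length_mix[simp]: "length (mix \<alpha> \<psi> a \<mu>) = min (length \<psi>) (length \<mu>)"
  by (simp add: mix_def)

lemma mix_nth: "i < length \<psi> \<Longrightarrow> i < length \<mu> \<Longrightarrow>
   mix \<alpha> \<psi> a \<mu> ! i = (if \<psi> ! i = 0 then restr \<alpha> a (\<mu> ! i) else \<mu> ! i)"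
  by (simp add: mix_def)

lemma restr_push:
  assumes "\<forall>j\<in>set m. j < length \<theta>"
  shows "imface (ocomp \<theta> (restr \<alpha> (ocomp a \<theta>) m)) = restr \<alpha> a (imface (ocomp \<theta> m))"
proof -
  have s: "sorted_wrt (<) (restr \<alpha> a (imface (ocomp \<theta> m)))"
    unfolding restr_def imface_def by (simp add: sorted_wrt_filter strict_sorted_list_of_set)
  have "set (ocomp \<theta> (restr \<alpha> (ocomp a \<theta>) m)) = set (restr \<alpha> a (imface (ocomp \<theta> m)))"
    using assms unfolding restr_def imface_def ocomp_def by auto
  then show ?thesis unfolding imface_def[of "ocomp \<theta> (restr \<alpha> (ocomp a \<theta>) m)"]
    by (simp add: ssl_set[OF s])
qed

lemma mix_push:
  assumes "length \<psi> = length \<mu>" "\<forall>m\<in>set \<mu>. \<forall>j\<in>set m. j < length \<theta>"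
  shows "mix \<alpha> \<psi> a (bsd_push \<theta> \<mu>) = bsd_push \<theta> (mix \<alpha> \<psi> (ocomp a \<theta>) \<mu>)"
proof (rule nth_equalityI)
  fix i assume "i < length (mix \<alpha> \<psi> a (bsd_push \<theta> \<mu>))"
  then have i: "i < length \<mu>" "i < length \<psi>" using assms(1) by (auto simp: bsd_push_def)
  have b: "\<forall>j\<in>set (\<mu> ! i). j < length \<theta>" using assms(2) i(1) nth_mem by blast
  show "mix \<alpha> \<psi> a (bsd_push \<theta> \<mu>) ! i = bsd_push \<theta> (mix \<alpha> \<psi> (ocomp a \<theta>) \<mu>) ! i"
    using i restr_push[OF b] by (simp add: bsd_push_def mix_nth)
qed (use assms in \<open>simp add: bsd_push_def\<close>)

lemma mix_act:
  assumes "\<forall>i\<in>set \<phi>. i < length \<mu>" "length \<psi> = length \<mu>"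
  shows "map (nth (mix \<alpha> \<psi> a \<mu>)) \<phi> = mix \<alpha> (ocomp \<psi> \<phi>) a (map (nth \<mu>) \<phi>)"
  by (rule nth_equalityI) (use assms in \<open>auto simp: mix_nth ocomp_def\<close>)

lemma mix_chains:
  assumes "\<psi> \<in> ops q 1" "\<mu> \<in> chains p q" "\<forall>m\<in>set \<mu>. set \<alpha> \<subseteq> nth a ` set m" "\<alpha> \<noteq> []"
  shows "mix \<alpha> \<psi> a \<mu> \<in> chains p q"
proof -
  have L: "length \<mu> = Suc q" "\<forall>i<length \<mu>. face p (\<mu> ! i)"
    "\<forall>i. Suc i < length \<mu> \<longrightarrow> set (\<mu> ! i) \<subseteq> set (\<mu> ! Suc i)" using assms(2) unfolding chains_def by auto
  have P: "length \<psi> = Suc q" "sorted \<psi>" "\<forall>i\<in>set \<psi>. i \<le> 1" using assms(1) unfolding ops_def by auto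
  have F: "face p (restr \<alpha> a m)" if "m \<in> set \<mu>" "face p m" for m
  proof -
    obtain z where z: "z \<in> set \<alpha>" using assms(4) by (cases \<alpha>) auto
    have "set \<alpha> \<subseteq> nth a ` set m" using assms(3) that(1) by simp
    then have "z \<in> nth a ` set m" using z by (rule subsetD)
    then obtain j where "j \<in> set m" "a ! j = z" by (rule imageE) simp
    then have "restr \<alpha> a m \<noteq> []" using z unfolding restr_def by (auto simp: filter_empty_conv)
    then show ?thesis using that(2) unfolding face_def restr_def by (auto simp: sorted_wrt_filter)
  qed
  have "face p (mix \<alpha> \<psi> a \<mu> ! i)" if "i < Suc q" for i
  proof -
    have m: "\<mu> ! i \<in> set \<mu>" "face p (\<mu> ! i)" using that L by auto
    show ?thesis
    proof (cases "\<psi> ! i = 0")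
      case True then show ?thesis using F[OF m] that L P by (simp add: mix_nth)
    next
      case False then show ?thesis using m that L P by (simp add: mix_nth)
    qed
  qed
  moreover have "set (mix \<alpha> \<psi> a \<mu> ! i) \<subseteq> set (mix \<alpha> \<psi> a \<mu> ! Suc i)" if "Suc i < Suc q" for i
  proof -
    have "\<psi> ! i \<le> \<psi> ! Suc i" using P that by (simp add: sorted_iff_nth_mono)
    moreover have "\<psi> ! Suc i \<le> 1" using P that by (simp add: nth_mem)
    moreover have s: "set (\<mu> ! i) \<subseteq> set (\<mu> ! Suc i)" using L that by simp
    moreover have "set (restr \<alpha> a m) \<subseteq> set m" for m unfolding restr_def by simp
    moreover have "set (restr \<alpha> a (\<mu> ! i)) \<subseteq> set (restr \<alpha> a (\<mu> ! Suc i))"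
      using s unfolding restr_def by auto
    ultimately show ?thesis using that L P
      by (cases "\<psi> ! i = 0"; cases "\<psi> ! Suc i = 0") (auto simp: mix_nth)
  qed
  moreover have "length (mix \<alpha> \<psi> a \<mu>) = Suc q" using L P by simp
  ultimately show ?thesis unfolding chains_def by simp
qed

lemma restr_sup: "set \<alpha> \<subseteq> nth a ` set m \<Longrightarrow> set \<alpha> \<subseteq> nth a ` set (restr \<alpha> a m)"
  unfolding restr_def by auto

lemma restr_sub: "nth a ` set (restr \<alpha> a m) \<subseteq> set \<alpha>"
  unfolding restr_def by auto

lemma mix_star_sets:
  assumes "length \<psi> = length \<mu>" "\<forall>m\<in>set \<mu>. set \<alpha> \<subseteq> nth a ` set m"
  shows "\<forall>m\<in>set (mix \<alpha> \<psi> a \<mu>). set \<alpha> \<subseteq> nth a ` set m"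
proof
  fix m assume "m \<in> set (mix \<alpha> \<psi> a \<mu>)"
  then obtain i where i: "i < length \<mu>" "i < length \<psi>" "m = mix \<alpha> \<psi> a \<mu> ! i"
    by (auto simp: in_set_conv_nth)
  have "set \<alpha> \<subseteq> nth a ` set (\<mu> ! i)" using assms(2) i(1) nth_mem by blast
  then show "set \<alpha> \<subseteq> nth a ` set m" using i restr_sup by (auto simp: mix_nth)
qed

lemma mix_zero:
  assumes "\<forall>m\<in>set \<mu>. set \<alpha> \<subseteq> nth a ` set m" "sorted_wrt (<) \<alpha>"
  shows "bsd_push a (mix \<alpha> (replicate (length \<mu>) 0) a \<mu>) = replicate (length \<mu>) \<alpha>"
proof (rule nth_equalityI)
  fix i assume i: "i < length (bsd_push a (mix \<alpha> (replicate (length \<mu>) 0) a \<mu>))"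
  then have i': "i < length \<mu>" by (simp add: bsd_push_def)
  have "set \<alpha> \<subseteq> nth a ` set (\<mu> ! i)" using assms(1) i' nth_mem by blast
  then have "set (ocomp a (restr \<alpha> a (\<mu> ! i))) = set \<alpha>"
    using restr_sup[of \<alpha> a "\<mu> ! i"] restr_sub[of a \<alpha> "\<mu> ! i"] unfolding ocomp_def by auto
  then have "imface (ocomp a (restr \<alpha> a (\<mu> ! i))) = \<alpha>"
    unfolding imface_def using ssl_set[OF assms(2)] by metis
  then show "bsd_push a (mix \<alpha> (replicate (length \<mu>) 0) a \<mu>) ! i = replicate (length \<mu>) \<alpha> ! i"
    using i' by (simp add: bsd_push_def mix_nth)
qed (simp add: bsd_push_def)

lemma mix_one: "mix \<alpha> (replicate (length \<mu>) 1) a \<mu> = \<mu>"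
  by (rule nth_equalityI) (auto simp: mix_nth)

lemma mix_fiber:
  assumes "bsd_push a \<mu> = replicate (length \<mu>) \<alpha>" "length \<psi> = length \<mu>"
  shows "mix \<alpha> \<psi> a \<mu> = \<mu>"
proof (rule nth_equalityI)
  fix i assume i: "i < length (mix \<alpha> \<psi> a \<mu>)"
  then have i': "i < length \<mu>" using assms(2) by simp
  have "imface (ocomp a (\<mu> ! i)) = \<alpha>" using arg_cong[OF assms(1), of "\<lambda>l. l ! i"] i'
    by (simp add: bsd_push_def)
  then have "set (ocomp a (\<mu> ! i)) = set \<alpha>" by (metis set_imface)
  then have "restr \<alpha> a (\<mu> ! i) = \<mu> ! i" unfolding restr_def ocomp_def by (auto simp: filter_id_conv)
  then show "mix \<alpha> \<psi> a \<mu> ! i = \<mu> ! i" using i' assms(2) by (simp add: mix_nth)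
qed (use assms in simp)



lemma eq_inv:
  assumes "equivclp R a b" "\<And>u v. R u v \<Longrightarrow> P u = P v" "P a"
  shows "P b"
  using assms(1)
proof (induction rule: equivclp_induct)
  case base then show ?case using assms(3) .
next
  case (step y z) then show ?case using assms(2) by metis
qed

lemma eq_fun:
  assumes "equivclp R a b" "\<And>u v. R u v \<Longrightarrow> G u = G v"
  shows "G a = G b"
  using eq_inv[of R a b "\<lambda>x. G x = G a"] assms by auto

lemma r_equivclp: "R x y \<Longrightarrow> equivclp R x y"
  unfolding equivclp_def by (simp add: symclp_def r_into_rtranclp)

lemma eq_trans: "equivclp R x y \<Longrightarrow> equivclp R y z \<Longrightarrow> equivclp R x z"
  using transpD[OF transp_equivclp] by metis

lemma eq_refl: "equivclp R x x"
  unfolding equivclp_def by simp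

lemma eq_map:
  assumes "equivclp R a b" "P a" "\<And>u v. R u v \<Longrightarrow> P u = P v"
    "\<And>u v. R u v \<Longrightarrow> P u \<Longrightarrow> P v \<Longrightarrow> S (F u) (F v)"
  shows "equivclp S (F a) (F b)"
proof -
  have "P b \<and> equivclp S (F a) (F b)"
    using assms(1)
  proof (induction rule: equivclp_induct)
    case base then show ?case using assms(2) eq_refl by metis
  next
    case (step y z)
    then have Pz: "P z" using assms(3) by metis
    have "equivclp S (F y) (F z)"
    proof (cases "R y z")
      case True then show ?thesis using assms(4) step Pz r_equivclp by metis
    next
      case False then have "R z y" using step by simp
      then show ?thesis using assms(4) step Pz r_equivclp equivclp_sym by metis
    qed
    then show ?case using Pz step eq_trans by metis
  qed
  then show ?thesis by simp
qed

lemma smap_comp: "smap X Y f \<Longrightarrow> smap Y Z g \<Longrightarrow> smap X Z (g \<circ> f)"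
  unfolding smap_def by simp

lemma smap_id: "smap X X id"
  unfolding smap_def by simp

definition valid :: "'a sset \<Rightarrow> nat \<Rightarrow> (nat \<times> 'a \<times> nat list list) \<Rightarrow> bool" where
  "valid E q t = (case t of (p, x, \<mu>) \<Rightarrow> x \<in> cells E p \<and> \<mu> \<in> chains p q)"

definition rep :: "'b set \<Rightarrow> 'b" where "rep c = (SOME t. t \<in> c)"

definition tpush :: "('a \<Rightarrow> nat list) \<Rightarrow> (nat \<times> 'a \<times> nat list list) \<Rightarrow> nat list list" where
  "tpush f t = (case t of (p, x, \<mu>) \<Rightarrow> bsd_push (f x) \<mu>)"

definition tact :: "nat list \<Rightarrow> (nat \<times> 'a \<times> nat list list) \<Rightarrow> (nat \<times> 'a \<times> nat list list)" where
  "tact \<phi> t = (case t of (p, x, \<mu>) \<Rightarrow> (p, x, map (nth \<mu>) \<phi>))"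

lemma Sdf_rep: "Sdf f c = tpush f (rep c)"
  unfolding Sdf_def tpush_def rep_def bsd_push_def by simp

lemma Sd_act: "act (Sd E) q \<phi> c = sd_class E (length \<phi> - 1) (tact \<phi> (rep c))"
  unfolding Sd_def tact_def rep_def by (simp split: prod.split)

lemma chains_bound:
  assumes "\<mu> \<in> chains p q" "m \<in> set \<mu>" "j \<in> set m" shows "j < Suc p"
proof -
  obtain i where i: "i < length \<mu>" "m = \<mu> ! i" using assms(2) by (auto simp: in_set_conv_nth)
  then have "face p m" using assms(1) unfolding chains_def by simp
  then show ?thesis using assms(3) unfolding face_def by auto
qed

lemma chains_len: "\<mu> \<in> chains p q \<Longrightarrow> length \<mu> = Suc q"
  unfolding chains_def by simp

lemma ops_len: "\<theta> \<in> ops p' p \<Longrightarrow> length \<theta> = Suc p'"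
  unfolding ops_def by simp

lemma ops_bound: "\<theta> \<in> ops p' p \<Longrightarrow> i \<in> set \<theta> \<Longrightarrow> i < Suc p"
  unfolding ops_def by auto

lemma ocomp_ops:
  assumes "\<psi> \<in> ops q r" "\<phi> \<in> ops q' q"
  shows "ocomp \<psi> \<phi> \<in> ops q' r"
proof -
  have b: "\<phi> ! i < length \<psi>" if "i < length \<phi>" for i
    using ops_bound[OF assms(2), of "\<phi> ! i"] ops_len[OF assms(1)] that by simp
  have "sorted (ocomp \<psi> \<phi>)" unfolding sorted_iff_nth_mono
  proof (intro allI impI)
    fix i j assume ij: "i \<le> j" "j < length (ocomp \<psi> \<phi>)"
    then have "\<phi> ! i \<le> \<phi> ! j" using assms(2) unfolding ops_def ocomp_def by (simp add: sorted_iff_nth_mono)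
    moreover have "\<phi> ! j < length \<psi>" using b ij unfolding ocomp_def by simp
    ultimately show "ocomp \<psi> \<phi> ! i \<le> ocomp \<psi> \<phi> ! j"
      using assms(1) ij unfolding ops_def ocomp_def by (simp add: sorted_iff_nth_mono)
  qed
  moreover have "\<forall>i\<in>set (ocomp \<psi> \<phi>). i \<le> r"
  proof
    fix i assume "i \<in> set (ocomp \<psi> \<phi>)"
    then obtain k where k: "k < length \<phi>" "i = \<psi> ! (\<phi> ! k)" unfolding ocomp_def by (auto simp: in_set_conv_nth)
    then have "\<psi> ! (\<phi> ! k) \<in> set \<psi>" using b by simp
    then show "i \<le> r" using assms(1) k unfolding ops_def by simp
  qed
  ultimately show ?thesis using assms unfolding ops_def ocomp_def by simp
qed

lemma set_imface_ocomp: "set (imface (ocomp a m)) = nth a ` set m"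
  by (simp add: ocomp_def)

locale S =
  fixes E :: "'a sset" and f :: "'a \<Rightarrow> nat list" and n :: nat and \<alpha> :: "nat list"
  assumes sE: "sset E" and sf: "smap E (stdsimplex n) f" and fa: "face n \<alpha>"
begin

lemma f_act: "x \<in> cells E p \<Longrightarrow> \<theta> \<in> ops p' p \<Longrightarrow> f (act E p \<theta> x) = ocomp (f x) \<theta>"
  using sf unfolding smap_def stdsimplex_def by simp

lemma f_cells: "x \<in> cells E p \<Longrightarrow> f x \<in> ops p n"
  using sf unfolding smap_def stdsimplex_def by simp

lemma E_act: "x \<in> cells E p \<Longrightarrow> \<theta> \<in> ops p' p \<Longrightarrow> act E p \<theta> x \<in> cells E p'"
  using sE unfolding sset_def by blast

lemma gen_valid: "sd_gen E q u v \<Longrightarrow> valid E q u \<and> valid E q v"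
  unfolding sd_gen_def valid_def using E_act push_chains by fastforce

lemma gen_push: "sd_gen E q u v \<Longrightarrow> tpush f u = tpush f v"
proof -
  assume "sd_gen E q u v"
  then obtain p p' x \<theta> \<mu> where h: "x \<in> cells E p" "\<theta> \<in> ops p' p" "\<mu> \<in> chains p' q"
    "u = (p', act E p \<theta> x, \<mu>)" "v = (p, x, bsd_push \<theta> \<mu>)" unfolding sd_gen_def by blast
  have "imface (ocomp (ocomp (f x) \<theta>) m) = imface (ocomp (f x) (imface (ocomp \<theta> m)))" if "m \<in> set \<mu>" for m
    using push_push chains_bound[OF h(3) that] ops_len[OF h(2)] by metis
  then show ?thesis using h f_act unfolding tpush_def bsd_push_def by simp
qed

lemma cls_mem: "t \<in> sd_class E q t"
  unfolding sd_class_def by (simp add: eq_refl)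

lemma cls_eq:
  assumes e: "equivclp (sd_gen E q) t t'" shows "sd_class E q t = sd_class E q t'"
proof -
  have "equivclp (sd_gen E q) t y \<longleftrightarrow> equivclp (sd_gen E q) t' y" for y
    using eq_trans[OF e, of y] eq_trans[OF equivclp_sym[OF e], of y] by blast
  then have "equivclp (sd_gen E q) t = equivclp (sd_gen E q) t'" by (rule ext)
  then show ?thesis unfolding sd_class_def by simp
qed

lemma valid_inv: "sd_gen E q u v \<Longrightarrow> valid E q u = valid E q v"
  using gen_valid by blast

lemma rep_cls:
  assumes "valid E q t"
  shows "equivclp (sd_gen E q) t (rep (sd_class E q t)) \<and> valid E q (rep (sd_class E q t))"
proof -
  have "rep (sd_class E q t) \<in> sd_class E q t" unfolding rep_def by (rule someI, rule cls_mem)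
  then have e: "equivclp (sd_gen E q) t (rep (sd_class E q t))" unfolding sd_class_def by simp
  moreover have "valid E q (rep (sd_class E q t))"
    by (rule eq_inv[OF e, of "valid E q", OF valid_inv assms])
  ultimately show ?thesis by simp
qed

lemma Sd_cellsD:
  assumes "c \<in> cells (Sd E) q"
  shows "valid E q (rep c) \<and> c = sd_class E q (rep c)"
proof -
  obtain p x \<mu> where c: "c = sd_class E q (p, x, \<mu>)" "x \<in> cells E p" "\<mu> \<in> chains p q"
    using assms unfolding Sd_def by auto
  have v: "valid E q (p, x, \<mu>)" using c unfolding valid_def by simp
  show ?thesis using rep_cls[OF v] cls_eq c(1) by metis
qed

lemma Sd_cellsI: "valid E q t \<Longrightarrow> sd_class E q t \<in> cells (Sd E) q"
  unfolding Sd_def valid_def by (auto split: prod.splits)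

lemma Sdf_cls: "valid E q t \<Longrightarrow> Sdf f (sd_class E q t) = tpush f t"
  unfolding Sdf_rep using rep_cls eq_fun[of "sd_gen E q" _ _ "tpush f"] gen_push by metis

lemma act_wd:
  assumes "equivclp (sd_gen E q) t t'" "\<phi> \<in> ops q' q"
  shows "equivclp (sd_gen E q') (tact \<phi> t) (tact \<phi> t')"
proof (rule eq_map[OF assms(1), of "\<lambda>_. True"])
  fix u v assume "sd_gen E q u v"
  then obtain p p' x \<theta> \<mu> where h: "x \<in> cells E p" "\<theta> \<in> ops p' p" "\<mu> \<in> chains p' q"
    "u = (p', act E p \<theta> x, \<mu>)" "v = (p, x, bsd_push \<theta> \<mu>)" unfolding sd_gen_def by blast
  have b: "\<forall>i\<in>set \<phi>. i < length \<mu>" using ops_bound[OF assms(2)] chains_len[OF h(3)] by simp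
  show "sd_gen E q' (tact \<phi> u) (tact \<phi> v)"
    unfolding sd_gen_def tact_def h(4,5)
    using h(1,2) act_chains[OF assms(2) h(3)] act_push[OF b] by auto
qed auto

definition stc :: "(nat \<times> 'a \<times> nat list list) \<Rightarrow> bool" where
  "stc t = (\<forall>m\<in>set (tpush f t). set \<alpha> \<subseteq> set m)"

lemma stc_alt: "stc (p, x, \<mu>) = (\<forall>m\<in>set \<mu>. set \<alpha> \<subseteq> nth (f x) ` set m)"
  unfolding stc_def tpush_def bsd_push_def by (simp add: ocomp_def)

lemma stc_star:
  assumes "valid E q t"
  shows "tpush f t \<in> star n \<alpha> q \<longleftrightarrow> stc t"
proof -
  obtain p x \<mu> where t: "t = (p, x, \<mu>)" by (cases t) auto
  have "x \<in> cells E p" "\<mu> \<in> chains p q" using assms unfolding t valid_def by auto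
  then have "tpush f t \<in> chains n q" using push_chains[OF f_cells] unfolding t tpush_def by simp
  then show ?thesis unfolding star_def stc_def by (simp add: all_set_conv_all_nth)
qed

definition tmix :: "nat list \<Rightarrow> (nat \<times> 'a \<times> nat list list) \<Rightarrow> (nat \<times> 'a \<times> nat list list)" where
  "tmix \<psi> t = (case t of (p, x, \<mu>) \<Rightarrow> (p, x, mix \<alpha> \<psi> (f x) \<mu>))"

lemma alpha_ne: "\<alpha> \<noteq> []" using fa unfolding face_def by simp

lemma mix_wd:
  assumes "equivclp (sd_gen E q) t t'" "stc t" "\<psi> \<in> ops q 1"
  shows "equivclp (sd_gen E q) (tmix \<psi> t) (tmix \<psi> t')"
proof (rule eq_map[OF assms(1), of stc])
  show "stc t" by fact
  fix u v assume "sd_gen E q u v"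
  then show "stc u = stc v" unfolding stc_def using gen_push by metis
next
  fix u v assume g: "sd_gen E q u v" and su: "stc u"
  then obtain p p' x \<theta> \<mu> where h: "x \<in> cells E p" "\<theta> \<in> ops p' p" "\<mu> \<in> chains p' q"
    "u = (p', act E p \<theta> x, \<mu>)" "v = (p, x, bsd_push \<theta> \<mu>)" unfolding sd_gen_def by blast
  have fx: "f (act E p \<theta> x) = ocomp (f x) \<theta>" using f_act h by simp
  have s: "\<forall>m\<in>set \<mu>. set \<alpha> \<subseteq> nth (ocomp (f x) \<theta>) ` set m" using su unfolding h(4) stc_alt fx .
  have mc: "mix \<alpha> \<psi> (ocomp (f x) \<theta>) \<mu> \<in> chains p' q" using mix_chains[OF assms(3) h(3) s alpha_ne] .
  have b: "\<forall>m\<in>set \<mu>. \<forall>j\<in>set m. j < length \<theta>" using chains_bound[OF h(3)] ops_len[OF h(2)] by simp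
  have l: "length \<psi> = length \<mu>" using ops_len[OF assms(3)] chains_len[OF h(3)] by simp
  have "sd_gen E q (p', act E p \<theta> x, mix \<alpha> \<psi> (ocomp (f x) \<theta>) \<mu>) (p, x, bsd_push \<theta> (mix \<alpha> \<psi> (ocomp (f x) \<theta>) \<mu>))"
    unfolding sd_gen_def using h(1,2) mc by blast
  then show "sd_gen E q (tmix \<psi> u) (tmix \<psi> v)"
    unfolding tmix_def h(4,5) using mix_push[OF l b] fx by simp
qed

end



context S begin

definition Hm :: "(nat \<times> 'a \<times> nat list list) set \<Rightarrow> nat list \<Rightarrow> (nat \<times> 'a \<times> nat list list) set" where
  "Hm c \<psi> = sd_class E (length \<psi> - 1) (tmix \<psi> (rep c))"

definition lev :: "(nat \<times> 'a \<times> nat list list) set \<Rightarrow> nat" where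
  "lev c = length (snd (snd (rep c))) - 1"

definition gr :: "(nat \<times> 'a \<times> nat list list) set \<Rightarrow> (nat \<times> 'a \<times> nat list list) set" where
  "gr c = Hm c (replicate (Suc (lev c)) 0)"

lemma ES_cells: "c \<in> cells (ESt E f n \<alpha>) q \<longleftrightarrow> c \<in> cells (Sd E) q \<and> Sdf f c \<in> star n \<alpha> q"
  unfolding ESt_def subsset_def by simp

lemma Fib_cells: "c \<in> cells (Sd_fiber E f \<alpha>) q \<longleftrightarrow> c \<in> cells (Sd E) q \<and> Sdf f c = replicate (Suc q) \<alpha>"
  unfolding Sd_fiber_def subsset_def by simp

lemma ES_act: "act (ESt E f n \<alpha>) = act (Sd E)"
  unfolding ESt_def subsset_def by simp

lemma Fib_act: "act (Sd_fiber E f \<alpha>) = act (Sd E)"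
  unfolding Sd_fiber_def subsset_def by simp

lemma ES_rep:
  assumes "c \<in> cells (ESt E f n \<alpha>) q"
  shows "valid E q (rep c) \<and> stc (rep c) \<and> c = sd_class E q (rep c)"
  using assms Sd_cellsD stc_star Sdf_rep unfolding ES_cells by metis

lemma valid_len: "valid E q t \<Longrightarrow> length (snd (snd t)) = Suc q"
  unfolding valid_def by (auto split: prod.splits simp: chains_len)

lemma lev_cell: "c \<in> cells (Sd E) q \<Longrightarrow> lev c = q"
  unfolding lev_def using Sd_cellsD valid_len by fastforce

lemma tmix_valid:
  assumes "valid E q t" "stc t" "\<psi> \<in> ops q 1"
  shows "valid E q (tmix \<psi> t) \<and> stc (tmix \<psi> t)"
proof -
  obtain p x \<mu> where t: "t = (p, x, \<mu>)" by (cases t) auto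
  have v: "x \<in> cells E p" "\<mu> \<in> chains p q" using assms(1) unfolding t valid_def by auto
  have s: "\<forall>m\<in>set \<mu>. set \<alpha> \<subseteq> nth (f x) ` set m" using assms(2) unfolding t stc_alt .
  have l: "length \<psi> = length \<mu>" using ops_len[OF assms(3)] chains_len[OF v(2)] by simp
  show ?thesis unfolding t tmix_def valid_def
    using v mix_chains[OF assms(3) v(2) s alpha_ne] mix_star_sets[OF l s] stc_alt by simp
qed

lemma tact_valid:
  assumes "valid E q t" "stc t" "\<phi> \<in> ops q' q"
  shows "valid E q' (tact \<phi> t) \<and> stc (tact \<phi> t)"
proof -
  obtain p x \<mu> where t: "t = (p, x, \<mu>)" by (cases t) auto
  have v: "x \<in> cells E p" "\<mu> \<in> chains p q" using assms(1) unfolding t valid_def by auto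
  have s: "\<forall>m\<in>set \<mu>. set \<alpha> \<subseteq> nth (f x) ` set m" using assms(2) unfolding t stc_alt .
  have "set (map (nth \<mu>) \<phi>) \<subseteq> set \<mu>"
    using ops_bound[OF assms(3)] chains_len[OF v(2)] by auto
  then have "\<forall>m\<in>set (map (nth \<mu>) \<phi>). set \<alpha> \<subseteq> nth (f x) ` set m" using s by blast
  then show ?thesis unfolding t tact_def valid_def
    using v act_chains[OF assms(3) v(2)] stc_alt by simp
qed

lemma act_cls:
  assumes "valid E q t" "\<phi> \<in> ops q' q"
  shows "act (Sd E) q \<phi> (sd_class E q t) = sd_class E q' (tact \<phi> t)"
proof -
  have "equivclp (sd_gen E q) t (rep (sd_class E q t))" using rep_cls[OF assms(1)] by simp
  then have "equivclp (sd_gen E q') (tact \<phi> t) (tact \<phi> (rep (sd_class E q t)))" using act_wd assms(2) by blast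
  then have "sd_class E q' (tact \<phi> t) = sd_class E q' (tact \<phi> (rep (sd_class E q t)))" by (rule cls_eq)
  then show ?thesis unfolding Sd_act using ops_len[OF assms(2)] by simp
qed

lemma H_cells:
  assumes "c \<in> cells (ESt E f n \<alpha>) q" "\<psi> \<in> ops q 1"
  shows "Hm c \<psi> \<in> cells (ESt E f n \<alpha>) q"
proof -
  have r: "valid E q (rep c)" "stc (rep c)" using ES_rep[OF assms(1)] by auto
  have m: "valid E q (tmix \<psi> (rep c))" "stc (tmix \<psi> (rep c))" using tmix_valid[OF r assms(2)] by auto
  have h: "Hm c \<psi> = sd_class E q (tmix \<psi> (rep c))" unfolding Hm_def using ops_len[OF assms(2)] by simp
  show ?thesis unfolding ES_cells h using Sd_cellsI[OF m(1)] Sdf_cls[OF m(1)] stc_star[OF m(1)] m(2) by simp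
qed

lemma tact_tmix:
  assumes "valid E q t" "\<psi> \<in> ops q 1" "\<phi> \<in> ops q' q"
  shows "tact \<phi> (tmix \<psi> t) = tmix (ocomp \<psi> \<phi>) (tact \<phi> t)"
proof -
  obtain p x \<mu> where t: "t = (p, x, \<mu>)" by (cases t) auto
  have v: "\<mu> \<in> chains p q" using assms(1) unfolding t valid_def by auto
  have b: "\<forall>i\<in>set \<phi>. i < length \<mu>" using ops_bound[OF assms(3)] chains_len[OF v] by simp
  have l: "length \<psi> = length \<mu>" using ops_len[OF assms(2)] chains_len[OF v] by simp
  show ?thesis unfolding t tact_def tmix_def using mix_act[OF b l] by simp
qed

lemma H_act:
  assumes "c \<in> cells (ESt E f n \<alpha>) q" "\<psi> \<in> ops q 1" "\<phi> \<in> ops q' q"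
  shows "Hm (act (Sd E) q \<phi> c) (ocomp \<psi> \<phi>) = act (Sd E) q \<phi> (Hm c \<psi>)"
proof -
  define t where "t = rep c"
  have r: "valid E q t" "stc t" "c = sd_class E q t" using ES_rep[OF assms(1)] unfolding t_def by auto
  have ta: "valid E q' (tact \<phi> t)" "stc (tact \<phi> t)" using tact_valid[OF r(1,2) assms(3)] by auto
  have c': "act (Sd E) q \<phi> c = sd_class E q' (tact \<phi> t)" using act_cls[OF r(1) assms(3)] r(3) by simp
  have po: "ocomp \<psi> \<phi> \<in> ops q' 1" using ocomp_ops[OF assms(2,3)] .
  have lo: "length (ocomp \<psi> \<phi>) - 1 = q'" using ops_len[OF po] by simp
  have e: "equivclp (sd_gen E q') (tact \<phi> t) (rep (sd_class E q' (tact \<phi> t)))" using rep_cls[OF ta(1)] by simp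
  have L: "Hm (act (Sd E) q \<phi> c) (ocomp \<psi> \<phi>) = sd_class E q' (tmix (ocomp \<psi> \<phi>) (tact \<phi> t))"
    unfolding c' Hm_def lo using cls_eq[OF mix_wd[OF e ta(2) po]] by simp
  have m: "valid E q (tmix \<psi> t)" using tmix_valid[OF r(1,2) assms(2)] by simp
  have h: "Hm c \<psi> = sd_class E q (tmix \<psi> t)" unfolding Hm_def t_def using ops_len[OF assms(2)] by simp
  have R: "act (Sd E) q \<phi> (Hm c \<psi>) = sd_class E q' (tact \<phi> (tmix \<psi> t))"
    unfolding h using act_cls[OF m assms(3)] .
  show ?thesis unfolding L R tact_tmix[OF r(1) assms(2,3)] ..
qed

lemma zeros_ops: "replicate (Suc q) 0 \<in> ops q 1"
  unfolding ops_def by simp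

lemma ones_ops: "replicate (Suc q) 1 \<in> ops q 1"
  unfolding ops_def by simp

lemma gr_eq:
  assumes "c \<in> cells (ESt E f n \<alpha>) q" shows "gr c = Hm c (replicate (Suc q) 0)"
proof -
  have "lev c = q" using lev_cell assms unfolding ES_cells by blast
  then show ?thesis unfolding gr_def by simp
qed

lemma H_one:
  assumes "c \<in> cells (ESt E f n \<alpha>) q"
  shows "Hm c (replicate (Suc q) 1) = c"
proof -
  have r: "valid E q (rep c)" "c = sd_class E q (rep c)" using ES_rep[OF assms] by auto
  obtain p x \<mu> where t: "rep c = (p, x, \<mu>)" by (cases "rep c") auto
  have "length \<mu> = Suc q" using valid_len[OF r(1)] t by simp
  then have "mix \<alpha> (replicate (Suc q) 1) (f x) \<mu> = \<mu>" using mix_one[of \<alpha> \<mu> "f x"] by simp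
  then have "tmix (replicate (Suc q) 1) (rep c) = rep c" unfolding t tmix_def by simp
  then show ?thesis unfolding Hm_def using r(2) by simp
qed

lemma gr_fib:
  assumes "c \<in> cells (ESt E f n \<alpha>) q"
  shows "gr c \<in> cells (Sd_fiber E f \<alpha>) q"
proof -
  have r: "valid E q (rep c)" "stc (rep c)" using ES_rep[OF assms] by auto
  have m: "valid E q (tmix (replicate (Suc q) 0) (rep c))" using tmix_valid[OF r zeros_ops] by simp
  have h: "gr c = sd_class E q (tmix (replicate (Suc q) 0) (rep c))" unfolding gr_eq[OF assms] Hm_def by simp
  obtain p x \<mu> where t: "rep c = (p, x, \<mu>)" by (cases "rep c") auto
  have l: "length \<mu> = Suc q" using valid_len[OF r(1)] t by simp
  have s: "\<forall>m\<in>set \<mu>. set \<alpha> \<subseteq> nth (f x) ` set m" using r(2) unfolding t stc_alt .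
  have a: "sorted_wrt (<) \<alpha>" using fa unfolding face_def by simp
  have "tpush f (tmix (replicate (Suc q) 0) (rep c)) = replicate (Suc q) \<alpha>"
    unfolding t tmix_def tpush_def using mix_zero[OF s a] l by simp
  then show ?thesis unfolding Fib_cells h using Sd_cellsI[OF m] Sdf_cls[OF m] by simp
qed

lemma rep_star: "replicate (Suc q) \<alpha> \<in> star n \<alpha> q"
  unfolding star_def chains_def using fa by (auto simp del: replicate_Suc)

lemma Fib_ES: "c \<in> cells (Sd_fiber E f \<alpha>) q \<Longrightarrow> c \<in> cells (ESt E f n \<alpha>) q"
  unfolding Fib_cells ES_cells using rep_star by simp

lemma gr_id:
  assumes "c \<in> cells (Sd_fiber E f \<alpha>) q"
  shows "gr c = c"
proof -
  have ce: "c \<in> cells (ESt E f n \<alpha>) q" using Fib_ES[OF assms] .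
  have r: "valid E q (rep c)" "c = sd_class E q (rep c)" using ES_rep[OF ce] by auto
  obtain p x \<mu> where t: "rep c = (p, x, \<mu>)" by (cases "rep c") auto
  have l: "length \<mu> = Suc q" using valid_len[OF r(1)] t by simp
  have "bsd_push (f x) \<mu> = replicate (length \<mu>) \<alpha>"
    using assms l unfolding Fib_cells Sdf_rep t tpush_def by simp
  then have "tmix (replicate (Suc q) 0) (rep c) = rep c"
    unfolding t tmix_def using mix_fiber l by simp
  then show ?thesis unfolding gr_eq[OF ce] Hm_def using r(2) by simp
qed

lemma gr_act:
  assumes "c \<in> cells (ESt E f n \<alpha>) q" "\<phi> \<in> ops q' q"
  shows "gr (act (Sd E) q \<phi> c) = act (Sd E) q \<phi> (gr c)"
proof -
  have r: "valid E q (rep c)" "stc (rep c)" "c = sd_class E q (rep c)" using ES_rep[OF assms(1)] by auto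
  have "act (Sd E) q \<phi> c = sd_class E q' (tact \<phi> (rep c))" using act_cls[OF r(1) assms(2)] r(3) by simp
  then have "act (Sd E) q \<phi> c \<in> cells (Sd E) q'" using Sd_cellsI tact_valid[OF r(1,2) assms(2)] by simp
  then have lv: "lev (act (Sd E) q \<phi> c) = q'" by (rule lev_cell)
  have z: "ocomp (replicate (Suc q) 0) \<phi> = replicate (Suc q') 0"
  proof (rule nth_equalityI)
    show "length (ocomp (replicate (Suc q) 0) \<phi>) = length (replicate (Suc q') 0)"
      using ops_len[OF assms(2)] unfolding ocomp_def by simp
    fix i assume "i < length (ocomp (replicate (Suc q) 0) \<phi>)"
    then have i: "i < length \<phi>" unfolding ocomp_def by simp
    then have "\<phi> ! i < Suc q" using ops_bound[OF assms(2)] nth_mem by blast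
    then show "ocomp (replicate (Suc q) 0) \<phi> ! i = replicate (Suc q') 0 ! i"
      using i ops_len[OF assms(2)] unfolding ocomp_def by (simp del: replicate_Suc)
  qed
  show ?thesis unfolding gr_def lv using H_act[OF assms(1) zeros_ops assms(2)] gr_eq[OF assms(1)] z
    by (simp add: gr_def)
qed

end



context S begin

lemma main: "homotopy_equivalence (Sd_fiber E f \<alpha>) (ESt E f n \<alpha>) id"
proof -
  let ?F = "Sd_fiber E f \<alpha>" and ?S = "ESt E f n \<alpha>"
  have i: "smap ?F ?S id" unfolding smap_def Fib_act ES_act using Fib_ES by simp
  have g: "smap ?S ?F gr" unfolding smap_def Fib_act ES_act using gr_fib gr_act by simp
  have h1: "elem_htpy ?F ?F (gr \<circ> id) id"
    unfolding elem_htpy_def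
  proof (intro conjI exI)
    show "smap ?F ?F (gr \<circ> id)" using smap_comp[OF i g] .
    show "smap ?F ?F id" by (rule smap_id)
    show "smap (sprod ?F (stdsimplex 1)) ?F (\<lambda>(c, \<psi>). gr c)"
      unfolding smap_def
    proof (intro conjI allI impI)
      fix q xx assume "xx \<in> cells (sprod ?F (stdsimplex 1)) q"
      then obtain c \<psi> where xx: "xx = (c, \<psi>)" "c \<in> cells ?F q"
        unfolding sprod_def by auto
      show "(\<lambda>(c, \<psi>). gr c) xx \<in> cells ?F q" unfolding xx using gr_fib[OF Fib_ES[OF xx(2)]] by simp
    next
      fix q q' \<theta> xx assume a: "xx \<in> cells (sprod ?F (stdsimplex 1)) q" "\<theta> \<in> ops q' q"
      then obtain c \<psi> where xx: "xx = (c, \<psi>)" "c \<in> cells ?F q"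
        unfolding sprod_def by auto
      show "(\<lambda>(c, \<psi>). gr c) (act (sprod ?F (stdsimplex 1)) q \<theta> xx) = act ?F q \<theta> ((\<lambda>(c, \<psi>). gr c) xx)"
        unfolding xx sprod_def Fib_act using gr_act[OF Fib_ES[OF xx(2)] a(2)] by simp
    qed
    show "\<forall>q x. x \<in> cells ?F q \<longrightarrow>
          (\<lambda>(c, \<psi>). gr c) (x, replicate (Suc q) 0) = (gr \<circ> id) x \<and> (\<lambda>(c, \<psi>). gr c) (x, replicate (Suc q) 1) = id x"
      using gr_id by simp
  qed
  have h2: "elem_htpy ?S ?S (id \<circ> gr) id"
    unfolding elem_htpy_def
  proof (intro conjI exI)
    show "smap ?S ?S (id \<circ> gr)" using smap_comp[OF g i] .
    show "smap ?S ?S id" by (rule smap_id)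
    show "smap (sprod ?S (stdsimplex 1)) ?S (\<lambda>(c, \<psi>). Hm c \<psi>)"
      unfolding smap_def
    proof (intro conjI allI impI)
      fix q xx assume "xx \<in> cells (sprod ?S (stdsimplex 1)) q"
      then obtain c \<psi> where xx: "xx = (c, \<psi>)" "c \<in> cells ?S q" "\<psi> \<in> ops q 1"
        unfolding sprod_def stdsimplex_def by auto
      show "(\<lambda>(c, \<psi>). Hm c \<psi>) xx \<in> cells ?S q" unfolding xx using H_cells[OF xx(2,3)] by simp
    next
      fix q q' \<theta> xx assume a: "xx \<in> cells (sprod ?S (stdsimplex 1)) q" "\<theta> \<in> ops q' q"
      then obtain c \<psi> where xx: "xx = (c, \<psi>)" "c \<in> cells ?S q" "\<psi> \<in> ops q 1"
        unfolding sprod_def stdsimplex_def by auto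
      show "(\<lambda>(c, \<psi>). Hm c \<psi>) (act (sprod ?S (stdsimplex 1)) q \<theta> xx) = act ?S q \<theta> ((\<lambda>(c, \<psi>). Hm c \<psi>) xx)"
        unfolding xx sprod_def stdsimplex_def ES_act using H_act[OF xx(2,3) a(2)] by simp
    qed
    show "\<forall>q x. x \<in> cells ?S q \<longrightarrow>
          (\<lambda>(c, \<psi>). Hm c \<psi>) (x, replicate (Suc q) 0) = (id \<circ> gr) x \<and> (\<lambda>(c, \<psi>). Hm c \<psi>) (x, replicate (Suc q) 1) = id x"
      using gr_eq H_one by simp
  qed
  show ?thesis unfolding homotopy_equivalence_def homotopic_def
    using i g smap_comp[OF i g] smap_comp[OF g i] smap_id r_equivclp[of "elem_htpy ?F ?F", OF h1] r_equivclp[of "elem_htpy ?S ?S", OF h2]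
    by blast
qed

end

theorem lemma4p2:
  fixes E :: "'a sset" and f :: "'a \<Rightarrow> nat list" and n :: nat and \<alpha> :: "nat list"
  assumes "sset E"
    and "smap E (stdsimplex n) f"
    and "\<forall>q. f ` cells E q = cells (stdsimplex n) q"
    and "face n \<alpha>"
  shows "homotopy_equivalence (Sd_fiber E f \<alpha>) (ESt E f n \<alpha>) id"
proof -
  interpret S E f n \<alpha> using assms(1,2,4) by unfold_locales
  show ?thesis by (rule main)
qed

end
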